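(* Let $p,q\ge1$, $\varepsilon\ge0$, $\Xi\subseteq\mathbb{R}^n$, $\mathcal{X}\subseteq\mathbb{R}^m$, and $F:\mathbb{R}^m\times\mathbb{R}^n\to\mathbb{R}$ such that for each $x\in\mathcal{X}$, $F(x,\cdot)$ is Lipschitz on $\Xi$ with respect to $\|\cdot\|_q$, with constant $\gamma_{x,F,q}=\|F(x,\cdot)\|_{\mathrm{Lip},q}<\infty$. Let $\widehat{\xi}_1,\dots,\widehat{\xi}_N\in\Xi$, $\widehat{\mathbb{P}}_N=\frac1N\sum_{i=1}^N\delta_{\widehat{\xi}_i}$ and $\widehat{\mathbb{P}}_N^{x,F}=\frac1N\sum_{i=1}^N\delta_{F(x,\widehat{\xi}_i)}$. Then for every $x\in\mathcal{X}$, $$\sup_{\mathbb{Q}\in\mathcal{B}_\varepsilon(\widehat{\mathbb{P}}_N)}\mathbb{E}_{\xi\sim\mathbb{Q}}[F(x,\xi)]\le\sup_{\mathbb{Q}\in\mathcal{B}_{\varepsilon\gamma_{x,F,q}}(\widehat{\mathbb{P}}_N^{x,F})}\mathbb{E}_{\zeta\sim\mathbb{Q}}[\zeta].$$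
   Context: $W_p$ denotes the $p$-Wasserstein distance: for a set $S$ with metric $\mathbf{d}$ and probability measures $\mu,\nu$ on $S$ with finite $p$-th moments, $W_p(\mu,\nu)=(\inf_\Pi\int\mathbf{d}^p\,d\Pi)^{1/p}$ over couplings $\Pi$ of $\mu,\nu$; $\mathcal{P}_p(S)$ is the set of such measures. The standard ball is $\mathcal{B}_\varepsilon(\widehat{\mathbb{P}}_N)=\{\mathbb{Q}\in\mathcal{P}_p(\Xi):W_p(\mathbb{Q},\widehat{\mathbb{P}}_N)\le\varepsilon\}$ with cost $\mathbf{d}(\xi,\zeta)=\|\xi-\zeta\|_q$. The decision-dependent ball is $\mathcal{B}_{r}(\widehat{\mathbb{P}}_N^{x,F})=\{\mathbb{Q}\in\mathcal{P}_p(F(x,\Xi)):W_p(\mathbb{Q},\widehat{\mathbb{P}}_N^{x,F})\le r\}$ with cost $|s-t|$ on $\mathbb{R}$, where $F(x,\Xi)=\{F(x,\xi):\xi\in\Xi\}$. The $q$-Lipschitz norm is $\|f\|_{\mathrm{Lip},q}=\sup_{\xi\ne\zeta\in\Xi}(f(\xi)-f(\zeta))/\|\xi-\zeta\|_q$. *)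

theory Defs
  imports "HOL-Probability.Probability"
begin

definition qnorm :: "ereal \<Rightarrow> real ^ 'n \<Rightarrow> real" where
  "qnorm q v = (if q = \<infinity> then Max (range (\<lambda>i. \<bar>v $ i\<bar>))
                else (\<Sum>i\<in>UNIV. \<bar>v $ i\<bar> powr real_of_ereal q) powr (1 / real_of_ereal q))"

definition lipnorm :: "ereal \<Rightarrow> (real ^ 'n) set \<Rightarrow> (real ^ 'n \<Rightarrow> real) \<Rightarrow> ereal" where
  "lipnorm q S f = (SUP z \<in> {(\<xi>, \<zeta>). \<xi> \<in> S \<and> \<zeta> \<in> S \<and> \<xi> \<noteq> \<zeta>}.
                      ereal ((f (fst z) - f (snd z)) / qnorm q (fst z - snd z)))"

definition couplings :: "'a measure \<Rightarrow> 'a measure \<Rightarrow> ('a \<times> 'a) measure set" where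
  "couplings \<mu> \<nu> = {C. prob_space C \<and> sets C = sets (\<mu> \<Otimes>\<^sub>M \<nu>)
                        \<and> distr C \<mu> fst = \<mu> \<and> distr C \<nu> snd = \<nu>}"

definition wasserstein :: "real \<Rightarrow> ('a \<Rightarrow> 'a \<Rightarrow> real) \<Rightarrow> 'a measure \<Rightarrow> 'a measure \<Rightarrow> real" where
  "wasserstein p d \<mu> \<nu> =
     (enn2real (INF C \<in> couplings \<mu> \<nu>. \<integral>\<^sup>+ z. ennreal (d (fst z) (snd z) powr p) \<partial>C)) powr (1 / p)"

definition Pp :: "real \<Rightarrow> 'a::real_normed_vector set \<Rightarrow> 'a measure set" where
  "Pp p S = {Q. sets Q = sets borel \<and> prob_space Q \<and> (AE \<xi> in Q. \<xi> \<in> S)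
               \<and> (\<integral>\<^sup>+ \<xi>. ennreal (norm \<xi> powr p) \<partial>Q) < \<infinity>}"

definition wball :: "real \<Rightarrow> ('a::real_normed_vector \<Rightarrow> 'a \<Rightarrow> real) \<Rightarrow> 'a set \<Rightarrow> 'a measure \<Rightarrow> real \<Rightarrow> 'a measure set" where
  "wball p d S P r = {Q \<in> Pp p S. wasserstein p d Q P \<le> r}"

definition empirical :: "nat \<Rightarrow> (nat \<Rightarrow> 'a::topological_space) \<Rightarrow> 'a measure" where
  "empirical N pts = distr (measure_pmf (pmf_of_set {..<N})) borel pts"

end

theory Submission
  imports Defs
begin


lemma qnorm_minus: "qnorm q (-v) = qnorm q v"
  by (simp add: qnorm_def)

lemma qnorm_commute: "qnorm q (a - b) = qnorm q (b - a)"
  by (metis minus_diff_eq qnorm_minus)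

lemma qnorm_nonneg: "0 \<le> qnorm q v"
proof (cases "q = \<infinity>")
  case True
  then show ?thesis unfolding qnorm_def
    by (simp add: Max_ge_iff) 
next
  case False
  then show ?thesis unfolding qnorm_def by simp
qed

lemma qnorm_pos:
  fixes v :: "real ^ 'n"
  assumes "q \<ge> 1" "v \<noteq> 0" shows "0 < qnorm q v"
proof -
  obtain i where i: "v $ i \<noteq> 0" using assms(2) by (metis vec_eq_iff zero_index)
  show ?thesis
  proof (cases "q = \<infinity>")
    case True
    have "\<bar>v $ i\<bar> \<le> Max (range (\<lambda>i. \<bar>v $ i\<bar>))" by (rule Max_ge) auto
    moreover have "0 < \<bar>v $ i\<bar>" using i by simp
    ultimately have "0 < Max (range (\<lambda>i. \<bar>v $ i\<bar>))" by linarith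
    then show ?thesis using True unfolding qnorm_def by simp
  next
    case False
    have "0 < (\<Sum>i\<in>UNIV. \<bar>v $ i\<bar> powr real_of_ereal q)"
      by (rule sum_pos2[where i=i]) (use i in auto)
    then show ?thesis using False unfolding qnorm_def by simp
  qed
qed

lemma qnorm_le:
  fixes v :: "real ^ 'n"
  assumes "q \<ge> 1" shows "qnorm q v \<le> real CARD('n) * norm v"
proof (cases "q = \<infinity>")
  case True
  have "Max (range (\<lambda>i. \<bar>v $ i\<bar>)) \<le> norm v"
    by (subst Max_le_iff) (auto simp: component_le_norm_cart)
  also have "norm v \<le> real CARD('n) * norm v"
  proof -
    have "1 \<le> real CARD('n)" by simp
    then show ?thesis using mult_right_mono[of 1 "real CARD('n)" "norm v"] by simp
  qed
  finally show ?thesis using True unfolding qnorm_def by simp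
next
  case False
  then obtain r where r: "q = ereal r" using assms by (cases q) auto
  have r1: "r \<ge> 1" using r assms by simp
  define n where "n = real CARD('n)"
  have n1: "n \<ge> 1" unfolding n_def by simp
  have "(\<Sum>i\<in>UNIV. \<bar>v $ i\<bar> powr r) \<le> (\<Sum>i\<in>(UNIV::'n set). norm v powr r)"
    by (intro sum_mono powr_mono2) (use r1 in \<open>auto simp: component_le_norm_cart\<close>)
  also have "\<dots> = n * norm v powr r" by (simp add: n_def)
  finally have A: "(\<Sum>i\<in>UNIV. \<bar>v $ i\<bar> powr r) \<le> n * norm v powr r" .
  have "(\<Sum>i\<in>UNIV. \<bar>v $ i\<bar> powr r) powr (1/r) \<le> (n * norm v powr r) powr (1/r)"
    by (rule powr_mono2) (use A r1 in \<open>auto intro: sum_nonneg\<close>)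
  also have "\<dots> = n powr (1/r) * norm v"
    using r1 n1 by (simp add: powr_mult powr_powr)
  also have "\<dots> \<le> n * norm v"
  proof (rule mult_right_mono)
    have "n powr (1/r) \<le> n powr 1" using n1 r1 by (intro powr_mono) auto
    then show "n powr (1/r) \<le> n" using n1 by simp
  qed simp
  finally show ?thesis using False r unfolding qnorm_def n_def by simp
qed

lemma qnorm_meas: "qnorm q \<in> borel_measurable borel"
proof (cases "q = \<infinity>")
  case True
  have "qnorm q = (\<lambda>v::real^'a. Max ((\<lambda>i. \<bar>v $ i\<bar>) ` UNIV))"
    using True by (simp add: qnorm_def fun_eq_iff)
  also have "\<dots> \<in> borel_measurable borel" by measurable
  finally show ?thesis .
next
  case False
  have "qnorm q = (\<lambda>v::real^'a. (\<Sum>i\<in>UNIV. \<bar>v $ i\<bar> powr real_of_ereal q) powr (1 / real_of_ereal q))"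
    using False by (simp add: qnorm_def fun_eq_iff)
  also have "\<dots> \<in> borel_measurable borel" by measurable
  finally show ?thesis .
qed

lemma powr_add_le:
  fixes x y p :: real
  assumes "x \<ge> 0" "y \<ge> 0" "p > 0"
  shows "(x + y) powr p \<le> 2 powr p * (x powr p + y powr p)"
proof -
  have "(x + y) powr p \<le> (2 * max x y) powr p"
    by (rule powr_mono2) (use assms in auto)
  also have "\<dots> = 2 powr p * max x y powr p" using assms by (simp add: powr_mult)
  also have "\<dots> \<le> 2 powr p * (x powr p + y powr p)"
    by (intro mult_left_mono) (auto simp: max_def)
  finally show ?thesis .
qed

lemma lip_bound:
  fixes f :: "real ^ 'n \<Rightarrow> real"
  assumes "q \<ge> 1" "lipnorm q S f < \<infinity>"
  shows "0 \<le> real_of_ereal (lipnorm q S f) \<and>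
    (\<forall>a\<in>S. \<forall>b\<in>S. \<bar>f a - f b\<bar> \<le> real_of_ereal (lipnorm q S f) * qnorm q (a - b))"
proof (cases "\<exists>a\<in>S. \<exists>b\<in>S. a \<noteq> b")
  case True
  let ?P = "{(\<xi>, \<zeta>). \<xi> \<in> S \<and> \<zeta> \<in> S \<and> \<xi> \<noteq> \<zeta>}"
  have up: "ereal ((f a - f b) / qnorm q (a - b)) \<le> lipnorm q S f" if "a \<in> S" "b \<in> S" "a \<noteq> b" for a b
    unfolding lipnorm_def using that by (intro SUP_upper2[where i="(a,b)"]) auto
  have abs: "ereal (\<bar>f a - f b\<bar> / qnorm q (a - b)) \<le> lipnorm q S f" if "a \<in> S" "b \<in> S" "a \<noteq> b" for a b
  proof (cases "f a - f b \<ge> 0")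
    case True then show ?thesis using up[OF that] by simp
  next
    case False
    have "ereal ((f b - f a) / qnorm q (b - a)) \<le> lipnorm q S f" using up that by auto
    then show ?thesis using False by (simp add: qnorm_commute[of q a b])
  qed
  obtain a b where ab: "a \<in> S" "b \<in> S" "a \<noteq> b" using True by auto
  have "0 \<le> lipnorm q S f"
    using abs[OF ab] qnorm_pos[OF assms(1), of "a - b"] ab
    by (meson divide_nonneg_nonneg abs_ge_zero ereal_less_eq(5) order_trans qnorm_nonneg)
  then obtain L where L: "lipnorm q S f = ereal L" "L \<ge> 0" using assms(2)
    by (cases "lipnorm q S f") auto
  have "\<bar>f a - f b\<bar> \<le> L * qnorm q (a - b)" if "a \<in> S" "b \<in> S" for a b
  proof (cases "a = b")
    case False
    have pos: "0 < qnorm q (a - b)" using qnorm_pos[OF assms(1), of "a - b"] False by simp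
    have "\<bar>f a - f b\<bar> / qnorm q (a - b) \<le> L" using abs[OF that False] L by simp
    then show ?thesis using pos by (simp add: divide_le_eq mult.commute)
  qed (simp add: L(2) qnorm_nonneg)
  then show ?thesis using L by simp
next
  case False
  have E: "{(\<xi>, \<zeta>). \<xi> \<in> S \<and> \<zeta> \<in> S \<and> \<xi> \<noteq> \<zeta>} = {}" using False by auto
  have "lipnorm q S f = -\<infinity>" unfolding lipnorm_def E
    by (simp add: bot_ereal_def[symmetric])
  then show ?thesis using False by auto
qed



lemma distr_pair_snd':
  assumes "prob_space M" "prob_space N"
  shows "distr (M \<Otimes>\<^sub>M N) N snd = N"
proof (intro measure_eqI)
  interpret M: prob_space M by fact
  interpret N: prob_space N by fact
  interpret pair_sigma_finite M N ..
  fix A assume A: "A \<in> sets (distr (M \<Otimes>\<^sub>M N) N snd)"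
  then have "emeasure (distr (M \<Otimes>\<^sub>M N) N snd) A = emeasure (M \<Otimes>\<^sub>M N) (space M \<times> A)"
    by (auto simp add: emeasure_distr space_pair_measure dest: sets.sets_into_space intro!: arg_cong2[where f=emeasure])
  with A show "emeasure (distr (M \<Otimes>\<^sub>M N) N snd) A = emeasure N A"
    by (simp add: N.emeasure_pair_measure_Times M.emeasure_space_1)
qed simp

lemma product_coupling:
  assumes "prob_space M" "prob_space N"
  shows "M \<Otimes>\<^sub>M N \<in> couplings M N"
  unfolding couplings_def
  using assms prob_space_pair distr_pair_snd' prob_space.distr_pair_fst by blast

lemma coupling_fst: "C \<in> couplings M N \<Longrightarrow> fst \<in> measurable C M"
proof -
  assume "C \<in> couplings M N"
  then have s: "sets C = sets (M \<Otimes>\<^sub>M N)" unfolding couplings_def by simp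
  show ?thesis using measurable_cong_sets[OF s refl, of M] measurable_fst by blast
qed

lemma coupling_snd: "C \<in> couplings M N \<Longrightarrow> snd \<in> measurable C N"
proof -
  assume "C \<in> couplings M N"
  then have s: "sets C = sets (M \<Otimes>\<^sub>M N)" unfolding couplings_def by simp
  show ?thesis using measurable_cong_sets[OF s refl, of N] measurable_snd by blast
qed

lemma coupling_AE_fst:
  assumes "C \<in> couplings M N" "AE x in M. x \<in> A" "A \<in> sets M"
  shows "AE z in C. fst z \<in> A"
proof -
  have D: "distr C M fst = M" using assms unfolding couplings_def by simp
  have "AE x in distr C M fst. x \<in> A" by (subst D) (rule assms(2))
  then show ?thesis using assms(3) coupling_fst[OF assms(1)]
    by (subst (asm) AE_distr_iff) (auto intro: sets.sets_Collect_const)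
qed

lemma coupling_AE_snd:
  assumes "C \<in> couplings M N" "AE x in N. x \<in> A" "A \<in> sets N"
  shows "AE z in C. snd z \<in> A"
proof -
  have D: "distr C N snd = N" using assms unfolding couplings_def by simp
  have "AE x in distr C N snd. x \<in> A" by (subst D) (rule assms(2))
  then show ?thesis using assms(3) coupling_snd[OF assms(1)]
    by (subst (asm) AE_distr_iff) (auto intro: sets.sets_Collect_const)
qed

lemma coupling_nn_fst:
  assumes "C \<in> couplings M N" "h \<in> borel_measurable M"
  shows "(\<integral>\<^sup>+ z. h (fst z) \<partial>C) = (\<integral>\<^sup>+ x. h x \<partial>M)"
proof -
  have D: "distr C M fst = M" using assms unfolding couplings_def by simp
  have "(\<integral>\<^sup>+ x. h x \<partial>M) = (\<integral>\<^sup>+ x. h x \<partial>distr C M fst)" by (subst D) (rule refl)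
  also have "\<dots> = (\<integral>\<^sup>+ z. h (fst z) \<partial>C)"
    by (rule nn_integral_distr[OF coupling_fst[OF assms(1)]]) (subst D, rule assms(2))
  finally show ?thesis ..
qed

lemma coupling_nn_snd:
  assumes "C \<in> couplings M N" "h \<in> borel_measurable N"
  shows "(\<integral>\<^sup>+ z. h (snd z) \<partial>C) = (\<integral>\<^sup>+ x. h x \<partial>N)"
proof -
  have D: "distr C N snd = N" using assms unfolding couplings_def by simp
  have "(\<integral>\<^sup>+ x. h x \<partial>N) = (\<integral>\<^sup>+ x. h x \<partial>distr C N snd)" by (subst D) (rule refl)
  also have "\<dots> = (\<integral>\<^sup>+ z. h (snd z) \<partial>C)"
    by (rule nn_integral_distr[OF coupling_snd[OF assms(1)]]) (subst D, rule assms(2))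
  finally show ?thesis ..
qed

lemma coupling_cost_finite:
  fixes M N :: "(real ^ 'n) measure"
  assumes C: "C \<in> couplings M N" and q: "q \<ge> 1" and p: "p > 0"
    and sM: "sets M = sets borel" and sN: "sets N = sets borel"
    and fM: "(\<integral>\<^sup>+ \<xi>. ennreal (norm \<xi> powr p) \<partial>M) < \<infinity>"
    and fN: "(\<integral>\<^sup>+ \<xi>. ennreal (norm \<xi> powr p) \<partial>N) < \<infinity>"
  shows "(\<integral>\<^sup>+ z. ennreal (qnorm q (fst z - snd z) powr p) \<partial>C) < \<infinity>"
proof -
  define K where "K = 2 powr p * real CARD('n) powr p"
  have K0: "K \<ge> 0" unfolding K_def by simp
  have pt: "qnorm q (a - b) powr p \<le> K * (norm a powr p + norm b powr p)" for a b :: "real ^ 'n"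
  proof -
    have "qnorm q (a - b) powr p \<le> (real CARD('n) * norm (a - b)) powr p"
      by (rule powr_mono2) (use p qnorm_le[OF q] qnorm_nonneg in auto)
    also have "\<dots> \<le> (real CARD('n) * (norm a + norm b)) powr p"
      by (rule powr_mono2) (use p norm_triangle_ineq4[of a b] in \<open>auto intro: mult_left_mono\<close>)
    also have "\<dots> = real CARD('n) powr p * (norm a + norm b) powr p" by (simp add: powr_mult)
    also have "\<dots> \<le> real CARD('n) powr p * (2 powr p * (norm a powr p + norm b powr p))"
      by (intro mult_left_mono powr_add_le) (use p in auto)
    finally show ?thesis by (simp add: K_def mult_ac)
  qed
  have "(\<integral>\<^sup>+ z. ennreal (qnorm q (fst z - snd z) powr p) \<partial>C)
      \<le> (\<integral>\<^sup>+ z. ennreal K * ennreal (norm (fst z) powr p) + ennreal K * ennreal (norm (snd z) powr p) \<partial>C)"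
    by (intro nn_integral_mono) (use pt K0 in \<open>auto simp: ennreal_mult'[symmetric] ennreal_plus[symmetric] distrib_left simp del: ennreal_plus\<close>)
  also have "\<dots> = ennreal K * (\<integral>\<^sup>+ z. ennreal (norm (fst z) powr p) \<partial>C) + ennreal K * (\<integral>\<^sup>+ z. ennreal (norm (snd z) powr p) \<partial>C)"
  proof -
    have m1: "fst \<in> measurable C borel" using coupling_fst[OF C] sM measurable_cong_sets[OF refl sM] by blast
    have m2: "snd \<in> measurable C borel" using coupling_snd[OF C] sN measurable_cong_sets[OF refl sN] by blast
    have a: "(\<lambda>z. ennreal K * ennreal (norm (fst z) powr p)) \<in> borel_measurable C" using m1 by measurable
    have b: "(\<lambda>z. ennreal K * ennreal (norm (snd z) powr p)) \<in> borel_measurable C" using m2 by measurable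
    have a': "(\<lambda>z. ennreal (norm (fst z) powr p)) \<in> borel_measurable C" using m1 by measurable
    have b': "(\<lambda>z. ennreal (norm (snd z) powr p)) \<in> borel_measurable C" using m2 by measurable
    show ?thesis by (simp add: nn_integral_add[OF a b] nn_integral_cmult[OF a'] nn_integral_cmult[OF b'])
  qed
  also have "\<dots> = ennreal K * (\<integral>\<^sup>+ \<xi>. ennreal (norm \<xi> powr p) \<partial>M) + ennreal K * (\<integral>\<^sup>+ \<xi>. ennreal (norm \<xi> powr p) \<partial>N)"
  proof -
    have "(\<lambda>\<xi>. ennreal (norm \<xi> powr p)) \<in> borel_measurable borel" by measurable
    then have h1: "(\<lambda>\<xi>. ennreal (norm \<xi> powr p)) \<in> borel_measurable M" and h2: "(\<lambda>\<xi>. ennreal (norm \<xi> powr p)) \<in> borel_measurable N"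
      using sM sN measurable_cong_sets[OF sM refl] measurable_cong_sets[OF sN refl] by blast+
    show ?thesis by (simp only: coupling_nn_fst[OF C h1] coupling_nn_snd[OF C h2])
  qed
  also have "\<dots> < \<infinity>" using fM fN by (simp add: ennreal_mult_less_top)
  finally show ?thesis .
qed



lemma push_coupling:
  fixes M N :: "'a::topological_space measure" and g :: "'a \<Rightarrow> real"
  assumes C: "C \<in> couplings M N" and sM: "sets M = sets borel" and sN: "sets N = sets borel"
    and g: "g \<in> borel_measurable borel"
  shows "distr C (borel \<Otimes>\<^sub>M borel) (\<lambda>z. (g (fst z), g (snd z))) \<in> couplings (distr M borel g) (distr N borel g)"
proof -
  let ?h = "\<lambda>z. (g (fst z), g (snd z))"
  let ?B = "borel \<Otimes>\<^sub>M borel :: (real \<times> real) measure"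
  have gM: "g \<in> measurable M borel" using g measurable_cong_sets[OF sM refl] by blast
  have gN: "g \<in> measurable N borel" using g measurable_cong_sets[OF sN refl] by blast
  have gM': "g \<in> measurable M (distr M borel g)" using gM by simp
  have gN': "g \<in> measurable N (distr N borel g)" using gN by simp
  have f: "fst \<in> measurable C M" and s: "snd \<in> measurable C N" using coupling_fst[OF C] coupling_snd[OF C] by auto
  have h: "?h \<in> measurable C ?B"
    using measurable_compose[OF f gM] measurable_compose[OF s gN] by (auto intro!: measurable_Pair simp: o_def)
  have pC: "prob_space C" using C unfolding couplings_def by simp
  have D1: "distr C M fst = M" and D2: "distr C N snd = N" using C unfolding couplings_def by auto
  have fB: "fst \<in> measurable ?B (distr M borel g)"
    using measurable_fst[of "borel::real measure" "borel::real measure"] by simp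
  have sB: "snd \<in> measurable ?B (distr N borel g)"
    using measurable_snd[of "borel::real measure" "borel::real measure"] by simp
  have "distr (distr C ?B ?h) (distr M borel g) fst = distr C (distr M borel g) (fst \<circ> ?h)"
    by (rule distr_distr[OF fB h])
  also have "fst \<circ> ?h = g \<circ> fst" by (simp add: o_def)
  also have "distr C (distr M borel g) (g \<circ> fst) = distr (distr C M fst) (distr M borel g) g"
    by (rule distr_distr[OF gM' f, symmetric])
  also have "\<dots> = distr M (distr M borel g) g" by (simp only: D1)
  also have "\<dots> = distr M borel g" by (rule distr_cong) auto
  finally have m1: "distr (distr C ?B ?h) (distr M borel g) fst = distr M borel g" .
  have "distr (distr C ?B ?h) (distr N borel g) snd = distr C (distr N borel g) (snd \<circ> ?h)"
    by (rule distr_distr[OF sB h])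
  also have "snd \<circ> ?h = g \<circ> snd" by (simp add: o_def)
  also have "distr C (distr N borel g) (g \<circ> snd) = distr (distr C N snd) (distr N borel g) g"
    by (rule distr_distr[OF gN' s, symmetric])
  also have "\<dots> = distr N (distr N borel g) g" by (simp only: D2)
  also have "\<dots> = distr N borel g" by (rule distr_cong) auto
  finally have m2: "distr (distr C ?B ?h) (distr N borel g) snd = distr N borel g" .
  have sets: "sets (distr C ?B ?h) = sets (distr M borel g \<Otimes>\<^sub>M distr N borel g)"
    by (simp add: sets_pair_measure_cong[of "distr M borel g" borel "distr N borel g" borel])
  show ?thesis unfolding couplings_def
    using m1 m2 sets prob_space.prob_space_distr[OF pC h] by blast
qed



lemma wass_push:
  fixes M N :: "(real ^ 'n) measure" and g :: "real ^ 'n \<Rightarrow> real"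
  assumes pM: "prob_space M" and pN: "prob_space N"
    and sM: "sets M = sets borel" and sN: "sets N = sets borel"
    and fM: "(\<integral>\<^sup>+ \<xi>. ennreal (norm \<xi> powr p) \<partial>M) < \<infinity>"
    and fN: "(\<integral>\<^sup>+ \<xi>. ennreal (norm \<xi> powr p) \<partial>N) < \<infinity>"
    and p: "p \<ge> 1" and q: "q \<ge> 1" and L: "L \<ge> 0"
    and g: "g \<in> borel_measurable borel" and A: "A \<in> sets borel"
    and AM: "AE x in M. x \<in> A" and AN: "AE x in N. x \<in> A"
    and lip: "\<forall>a\<in>A. \<forall>b\<in>A. \<bar>g a - g b\<bar> \<le> L * qnorm q (a - b)"
  shows "wasserstein p (\<lambda>s t. \<bar>s - t\<bar>) (distr M borel g) (distr N borel g)
          \<le> L * wasserstein p (\<lambda>\<xi> \<zeta>. qnorm q (\<xi> - \<zeta>)) M N"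
proof -
  define cost where "cost C = (\<integral>\<^sup>+ z. ennreal (qnorm q (fst z - snd z) powr p) \<partial>C)" for C :: "((real ^ 'n) \<times> (real ^ 'n)) measure"
  define cost' where "cost' C' = (\<integral>\<^sup>+ z. ennreal (\<bar>fst z - snd z\<bar> powr p) \<partial>C')" for C' :: "(real \<times> real) measure"
  define c where "c = (INF C \<in> couplings M N. cost C)"
  define c' where "c' = (INF C \<in> couplings (distr M borel g) (distr N borel g). cost' C)"
  define e where "e = L powr p"
  have e0: "e \<ge> 0" unfolding e_def by simp
  have p0: "p > 0" using p by simp
  have fin: "cost C < \<infinity>" if "C \<in> couplings M N" for C
    unfolding cost_def by (rule coupling_cost_finite[OF that q p0 sM sN fM fN])
  have prod: "M \<Otimes>\<^sub>M N \<in> couplings M N" by (rule product_coupling[OF pM pN])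
  have cfin: "c < \<infinity>" unfolding c_def using fin[OF prod] prod
    by (meson INF_lower order.strict_trans1)
  have key: "c' \<le> ennreal e * cost C" if C: "C \<in> couplings M N" for C
  proof -
    let ?h = "\<lambda>z. (g (fst z), g (snd z))"
    let ?C' = "distr C (borel \<Otimes>\<^sub>M borel) ?h"
    have C': "?C' \<in> couplings (distr M borel g) (distr N borel g)"
      by (rule push_coupling[OF C sM sN g])
    have gM: "g \<in> measurable M borel" using g measurable_cong_sets[OF sM refl] by blast
    have gN: "g \<in> measurable N borel" using g measurable_cong_sets[OF sN refl] by blast
    have f: "fst \<in> measurable C M" and s: "snd \<in> measurable C N" using coupling_fst[OF C] coupling_snd[OF C] by auto
    have fb: "fst \<in> measurable C borel" using f measurable_cong_sets[OF refl sM] by blast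
    have sb: "snd \<in> measurable C borel" using s measurable_cong_sets[OF refl sN] by blast
    have h: "?h \<in> measurable C (borel \<Otimes>\<^sub>M borel)"
      using measurable_compose[OF f gM] measurable_compose[OF s gN] by (auto intro!: measurable_Pair simp: o_def)
    have cm: "(\<lambda>z::real\<times>real. ennreal (\<bar>fst z - snd z\<bar> powr p)) \<in> borel_measurable (borel \<Otimes>\<^sub>M borel)"
      by measurable
    have qm: "(\<lambda>z. ennreal (qnorm q (fst z - snd z) powr p)) \<in> borel_measurable C"
      using measurable_compose[OF borel_measurable_diff[OF fb sb] qnorm_meas] by measurable
    have "c' \<le> cost' ?C'" unfolding c'_def by (rule INF_lower[OF C'])
    also have "\<dots> = (\<integral>\<^sup>+ z. ennreal (\<bar>g (fst z) - g (snd z)\<bar> powr p) \<partial>C)"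
      unfolding cost'_def by (subst nn_integral_distr[OF h]) (use cm in simp_all)
    also have "\<dots> \<le> (\<integral>\<^sup>+ z. ennreal e * ennreal (qnorm q (fst z - snd z) powr p) \<partial>C)"
    proof (rule nn_integral_mono_AE)
      have "AE z in C. fst z \<in> A" by (rule coupling_AE_fst[OF C AM]) (use A sM in simp)
      moreover have "AE z in C. snd z \<in> A" by (rule coupling_AE_snd[OF C AN]) (use A sN in simp)
      ultimately show "AE z in C. ennreal (\<bar>g (fst z) - g (snd z)\<bar> powr p) \<le> ennreal e * ennreal (qnorm q (fst z - snd z) powr p)"
      proof eventually_elim
        case (elim z)
        have "\<bar>g (fst z) - g (snd z)\<bar> powr p \<le> (L * qnorm q (fst z - snd z)) powr p"
          by (rule powr_mono2) (use p0 lip elim in auto)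
        also have "\<dots> = e * qnorm q (fst z - snd z) powr p"
          unfolding e_def using L qnorm_nonneg by (simp add: powr_mult)
        finally show ?case using e0 by (simp add: ennreal_mult'[symmetric])
      qed
    qed
    also have "\<dots> = ennreal e * cost C" unfolding cost_def by (rule nn_integral_cmult[OF qm])
    finally show ?thesis .
  qed
  have c'fin: "c' < \<infinity>"
    using key[OF prod] fin[OF prod] by (simp add: ennreal_mult_less_top order.strict_trans1)
  define a where "a = enn2real c'"
  define b where "b = enn2real c"
  have a0: "a \<ge> 0" and b0: "b \<ge> 0" unfolding a_def b_def by auto
  have c'a: "c' = ennreal a" unfolding a_def using c'fin by simp
  have ab: "a \<le> e * b"
  proof (cases "e = 0")
    case True
    then have "c' \<le> 0" using key[OF prod] by simp
    then show ?thesis using True c'a a0 by simp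
  next
    case False
    then have epos: "e > 0" using e0 by simp
    have "ennreal (a / e) \<le> cost C" if C: "C \<in> couplings M N" for C
    proof -
      define t where "t = enn2real (cost C)"
      have ct: "cost C = ennreal t" unfolding t_def using fin[OF C] by simp
      have t0: "t \<ge> 0" unfolding t_def by simp
      have "ennreal a \<le> ennreal (e * t)" using key[OF C] c'a ct e0 t0 by (simp add: ennreal_mult')
      then have "a \<le> e * t" using e0 t0 by simp
      then have "a / e \<le> t" using epos by (simp add: divide_le_eq mult.commute)
      then show ?thesis using ct by (simp add: ennreal_leI)
    qed
    then have "ennreal (a / e) \<le> c" unfolding c_def by (rule INF_greatest)
    then have "enn2real (ennreal (a / e)) \<le> b" unfolding b_def by (rule enn2real_mono) (use cfin in simp)
    then have "a / e \<le> b" using a0 e0 by simp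
    then show ?thesis using epos by (simp add: divide_le_eq mult.commute)
  qed
  have W1: "wasserstein p (\<lambda>s t. \<bar>s - t\<bar>) (distr M borel g) (distr N borel g) = a powr (1/p)"
    unfolding wasserstein_def a_def c'_def cost'_def by simp
  have W2: "wasserstein p (\<lambda>\<xi> \<zeta>. qnorm q (\<xi> - \<zeta>)) M N = b powr (1/p)"
    unfolding wasserstein_def b_def c_def cost_def by simp
  have "a powr (1/p) \<le> (e * b) powr (1/p)" by (rule powr_mono2) (use ab a0 p0 in auto)
  also have "\<dots> = e powr (1/p) * b powr (1/p)" using e0 b0 by (simp add: powr_mult)
  also have "e powr (1/p) = L"
    unfolding e_def using L p0 by (cases "L = 0") (auto simp: powr_powr)
  finally show ?thesis using W1 W2 by simp
qed



lemma sigma_compact_core: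
  fixes Q :: "(real ^ 'n) measure"
  assumes pQ: "prob_space Q" and sQ: "sets Q = sets borel" and AE: "AE \<xi> in Q. \<xi> \<in> S"
  shows "\<exists>K::nat \<Rightarrow> (real ^ 'n) set. (\<forall>k. compact (K k) \<and> K k \<subseteq> S) \<and> (AE \<xi> in Q. \<xi> \<in> (\<Union>k. K k))"
proof -
  interpret prob_space Q by fact
  have sp: "space Q = UNIV" using sets_eq_imp_space_eq[OF sQ] by simp
  from AE obtain N0 where N0: "{x \<in> space Q. \<not> x \<in> S} \<subseteq> N0" "N0 \<in> sets Q" "emeasure Q N0 = 0"
    by (auto elim!: AE_E)
  define B0 where "B0 = UNIV - N0"
  have B0S: "B0 \<subseteq> S" using N0(1) sp unfolding B0_def by auto
  have B0b: "B0 \<in> sets borel" using N0(2) sQ sp unfolding B0_def by (metis sets.compl_sets)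
  have "measure Q B0 = 1" unfolding B0_def using prob_compl[OF N0(2)] N0(3) sp
    by (simp add: emeasure_eq_measure)
  then have eB0: "emeasure Q B0 = 1" by (simp add: emeasure_eq_measure)
  have IR: "emeasure Q B0 = (SUP K \<in> {K. K \<subseteq> B0 \<and> compact K}. emeasure Q K)"
    by (rule inner_regular[OF sQ _ B0b]) simp
  have "\<exists>K. K \<subseteq> B0 \<and> compact K \<and> 1 - 1 / real (Suc k) < measure Q K" for k
  proof -
    have "ennreal (1 - 1 / real (Suc k)) < 1"
      by (simp add: ennreal_lessI)
    then have "ennreal (1 - 1 / real (Suc k)) < (SUP K \<in> {K. K \<subseteq> B0 \<and> compact K}. emeasure Q K)"
      using IR eB0 by simp
    then obtain K where K: "K \<subseteq> B0" "compact K" "ennreal (1 - 1 / real (Suc k)) < emeasure Q K"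
      by (auto simp: less_SUP_iff)
    then have "1 - 1 / real (Suc k) < measure Q K"
      by (simp add: emeasure_eq_measure ennreal_less_iff)
    then show ?thesis using K by auto
  qed
  then obtain K where K: "\<And>k. K k \<subseteq> B0" "\<And>k. compact (K k)" "\<And>k. 1 - 1 / real (Suc k) < measure Q (K k)"
    by metis
  define U where "U = (\<Union>k. K k)"
  have Kb: "K k \<in> sets Q" for k using K(2) sQ by (simp add: borel_closed compact_imp_closed)
  have Ub: "U \<in> sets Q" unfolding U_def using Kb by auto
  have ge: "1 - 1 / real (Suc k) < measure Q U" for k
    using K(3)[of k] finite_measure_mono[of "K k" U] Ub unfolding U_def by fastforce
  have "measure Q U \<ge> 1"
  proof (rule ccontr)
    assume "\<not> measure Q U \<ge> 1"
    then have "0 < 1 - measure Q U" by simp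
    then obtain k where "inverse (real (Suc k)) < 1 - measure Q U" using reals_Archimedean by blast
    then show False using ge[of k] by (simp add: field_simps)
  qed
  then have "prob U = 1" using prob_le_1[of U] by linarith
  then have "AE \<xi> in Q. \<xi> \<in> U" by (rule AE_prob_1)
  then show ?thesis using K B0S unfolding U_def by blast
qed



lemma per_Q:
  fixes f :: "real ^ 'n \<Rightarrow> real" and \<xi>hat :: "nat \<Rightarrow> real ^ 'n"
  assumes p: "p \<ge> 1" and q: "q \<ge> 1" and N: "N > 0" and pts: "\<forall>i<N. \<xi>hat i \<in> \<Xi>"
    and L: "L \<ge> 0" and lip: "\<forall>a\<in>\<Xi>. \<forall>b\<in>\<Xi>. \<bar>f a - f b\<bar> \<le> L * qnorm q (a - b)"
    and Q: "Q \<in> wball p (\<lambda>\<xi> \<zeta>. qnorm q (\<xi> - \<zeta>)) \<Xi> (empirical N \<xi>hat) \<epsilon>"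
  shows "\<exists>Q' \<in> wball p (\<lambda>s t. \<bar>s - t\<bar>) (f ` \<Xi>) (empirical N (\<lambda>i. f (\<xi>hat i))) (\<epsilon> * L).
           (\<integral>\<xi>. f \<xi> \<partial>completion Q) = (\<integral>\<zeta>. \<zeta> \<partial>Q')"
proof -
  define \<pi> where "\<pi> = pmf_of_set {..<N}"
  define P where "P = empirical N \<xi>hat"
  define P' where "P' = empirical N (\<lambda>i. f (\<xi>hat i))"
  have P_def': "P = distr (measure_pmf \<pi>) borel \<xi>hat" unfolding P_def empirical_def \<pi>_def ..
  have setpi: "set_pmf \<pi> = {..<N}" unfolding \<pi>_def using N by (subst set_pmf_of_set) auto
  have p0: "p > 0" using p by simp
  have sQ: "sets Q = sets borel" and pQ: "prob_space Q" and AEQ: "AE \<xi> in Q. \<xi> \<in> \<Xi>"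
    and mQ: "(\<integral>\<^sup>+ \<xi>. ennreal (norm \<xi> powr p) \<partial>Q) < \<infinity>"
    and WQ: "wasserstein p (\<lambda>\<xi> \<zeta>. qnorm q (\<xi> - \<zeta>)) Q P \<le> \<epsilon>"
    using Q unfolding wball_def Pp_def P_def by auto
  obtain K :: "nat \<Rightarrow> (real ^ 'n) set" where K: "\<And>k. compact (K k)" "\<And>k. K k \<subseteq> \<Xi>"
    and AEK: "AE \<xi> in Q. \<xi> \<in> (\<Union>k. K k)"
    using sigma_compact_core[OF pQ sQ AEQ] by blast
  define A where "A = (\<Union>k. K k) \<union> \<xi>hat ` {..<N}"
  have AX: "A \<subseteq> \<Xi>" unfolding A_def using K(2) pts by auto
  have Kb: "K k \<in> sets borel" for k using K(1) by (simp add: borel_closed compact_imp_closed)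
  have Ab: "A \<in> sets borel" unfolding A_def using Kb
    by (intro sets.Un) (auto intro!: borel_closed finite_imp_closed)
  define n where "n = real CARD('n)"
  have n0: "n \<ge> 0" unfolding n_def by simp
  have lipX: "lipschitz_on (L * n) \<Xi> f"
    unfolding lipschitz_on_def
  proof (intro conjI ballI)
    show "0 \<le> L * n" using L n0 by simp
    fix a b assume ab: "a \<in> \<Xi>" "b \<in> \<Xi>"
    have "\<bar>f a - f b\<bar> \<le> L * qnorm q (a - b)" using lip ab by auto
    also have "\<dots> \<le> L * (n * norm (a - b))" unfolding n_def
      by (intro mult_left_mono qnorm_le q L)
    finally show "dist (f a) (f b) \<le> L * n * dist a b" by (simp add: dist_real_def dist_norm mult_ac)
  qed
  have contX: "continuous_on \<Xi> f" by (rule lipschitz_on_continuous_on[OF lipX])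
  have contA: "continuous_on A f" by (rule continuous_on_subset[OF contX AX])
  define g where "g = (\<lambda>\<xi>. if \<xi> \<in> A then f \<xi> else 0)"
  have gb: "g \<in> borel_measurable borel" unfolding g_def
    by (rule borel_measurable_continuous_on_if[OF Ab contA continuous_on_const])
  have glip: "\<forall>a\<in>A. \<forall>b\<in>A. \<bar>g a - g b\<bar> \<le> L * qnorm q (a - b)"
    using lip AX unfolding g_def by auto
  have AEA: "AE \<xi> in Q. \<xi> \<in> A" using AEK unfolding A_def by auto
  have gQ: "g \<in> measurable Q borel" using gb measurable_cong_sets[OF sQ refl] by blast
  have xm: "\<xi>hat \<in> measurable (measure_pmf \<pi>) borel" by simp
  have pP: "prob_space P" unfolding P_def' by (rule prob_space.prob_space_distr[OF prob_space_measure_pmf xm])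
  have sP: "sets P = sets borel" unfolding P_def' by simp
  have AEP: "AE \<xi> in P. \<xi> \<in> A"
  proof -
    have "AE i in measure_pmf \<pi>. \<xi>hat i \<in> A" by (auto simp: AE_measure_pmf_iff setpi A_def)
    moreover have "{x \<in> space borel. x \<in> A} \<in> sets borel" using Ab by simp
    ultimately show ?thesis unfolding P_def' using AE_distr_iff[OF xm, of "\<lambda>x. x \<in> A"] by simp
  qed
  have mP: "(\<integral>\<^sup>+ \<xi>. ennreal (norm \<xi> powr p) \<partial>P) < \<infinity>"
  proof -
    define M0 where "M0 = (\<Sum>j<N. norm (\<xi>hat j) powr p)"
    have "(\<integral>\<^sup>+ \<xi>. ennreal (norm \<xi> powr p) \<partial>P) = (\<integral>\<^sup>+ i. ennreal (norm (\<xi>hat i) powr p) \<partial>measure_pmf \<pi>)"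
      unfolding P_def' by (subst nn_integral_distr[OF xm]) simp_all
    also have "\<dots> \<le> (\<integral>\<^sup>+ i. ennreal M0 \<partial>measure_pmf \<pi>)"
    proof (rule nn_integral_mono_AE)
      show "AE i in measure_pmf \<pi>. ennreal (norm (\<xi>hat i) powr p) \<le> ennreal M0"
        unfolding AE_measure_pmf_iff setpi M0_def
        by (auto intro!: ennreal_leI member_le_sum[where f="\<lambda>j. norm (\<xi>hat j) powr p", simplified])
    qed
    also have "\<dots> = ennreal M0" by (simp add: measure_pmf.emeasure_space_1)
    also have "\<dots> < \<infinity>" by simp
    finally show ?thesis .
  qed
  have P'eq: "P' = distr P borel g"
  proof -
    have "distr P borel g = distr (measure_pmf \<pi>) borel (g \<circ> \<xi>hat)"
      unfolding P_def' by (rule distr_distr[OF gb xm])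
    also have "\<dots> = distr (measure_pmf \<pi>) borel (\<lambda>i. f (\<xi>hat i))"
      by (rule distr_cong_AE) (auto simp: AE_measure_pmf_iff setpi g_def A_def)
    finally show ?thesis unfolding P'_def empirical_def \<pi>_def by simp
  qed
  define Q' where "Q' = distr Q borel g"
  have sQ': "sets Q' = sets borel" unfolding Q'_def by simp
  have pQ': "prob_space Q'" unfolding Q'_def by (rule prob_space.prob_space_distr[OF pQ gQ])
  have AEQ': "AE \<zeta> in Q'. \<zeta> \<in> f ` \<Xi>"
  proof -
    define S where "S = (\<Union>k. f ` K k) \<union> f ` \<xi>hat ` {..<N}"
    have "compact (f ` K k)" for k
      by (rule compact_continuous_image[OF continuous_on_subset[OF contX K(2)] K(1)])
    then have "f ` K k \<in> sets borel" for k by (simp add: borel_closed compact_imp_closed)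
    then have Sb: "S \<in> sets borel" unfolding S_def
      by (intro sets.Un) (auto intro!: borel_closed finite_imp_closed)
    have SX: "S \<subseteq> f ` \<Xi>" unfolding S_def using K(2) pts by auto
    have "AE \<xi> in Q. g \<xi> \<in> S" using AEA
      by (rule eventually_mono) (auto simp: g_def A_def S_def)
    then have "AE \<zeta> in Q'. \<zeta> \<in> S" unfolding Q'_def using Sb
      by (subst AE_distr_iff[OF gQ]) auto
    then show ?thesis by (rule eventually_mono) (use SX in auto)
  qed
  have mQ': "(\<integral>\<^sup>+ \<zeta>. ennreal (norm \<zeta> powr p) \<partial>Q') < \<infinity>"
  proof -
    define \<xi>0 where "\<xi>0 = \<xi>hat 0"
    have x0A: "\<xi>0 \<in> A" unfolding \<xi>0_def A_def using N by auto
    define \<alpha> where "\<alpha> = \<bar>f \<xi>0\<bar> + L * n * norm \<xi>0"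
    define \<beta> where "\<beta> = L * n"
    have a0: "\<alpha> \<ge> 0" and b0: "\<beta> \<ge> 0" unfolding \<alpha>_def \<beta>_def using L n0 by auto
    have bnd: "\<bar>g \<xi>\<bar> \<le> \<alpha> + \<beta> * norm \<xi>" if "\<xi> \<in> A" for \<xi>
    proof -
      have "\<bar>g \<xi>\<bar> \<le> \<bar>g \<xi>0\<bar> + \<bar>g \<xi> - g \<xi>0\<bar>" by simp
      also have "\<bar>g \<xi> - g \<xi>0\<bar> \<le> L * qnorm q (\<xi> - \<xi>0)" using glip that x0A by auto
      also have "\<dots> \<le> L * (n * norm (\<xi> - \<xi>0))" unfolding n_def by (intro mult_left_mono qnorm_le q L)
      also have "\<dots> \<le> L * (n * (norm \<xi> + norm \<xi>0))"
        by (intro mult_left_mono L n0 norm_triangle_ineq4)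
      finally show ?thesis using x0A unfolding \<alpha>_def \<beta>_def g_def by (simp add: algebra_simps)
    qed
    have "(\<integral>\<^sup>+ \<zeta>. ennreal (norm \<zeta> powr p) \<partial>Q') = (\<integral>\<^sup>+ \<xi>. ennreal (norm (g \<xi>) powr p) \<partial>Q)"
      unfolding Q'_def by (subst nn_integral_distr[OF gQ]) simp_all
    also have "\<dots> \<le> (\<integral>\<^sup>+ \<xi>. ennreal (2 powr p * \<alpha> powr p) + ennreal (2 powr p * \<beta> powr p) * ennreal (norm \<xi> powr p) \<partial>Q)"
    proof (rule nn_integral_mono_AE)
      show "AE \<xi> in Q. ennreal (norm (g \<xi>) powr p) \<le> ennreal (2 powr p * \<alpha> powr p) + ennreal (2 powr p * \<beta> powr p) * ennreal (norm \<xi> powr p)"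
        using AEA
      proof (rule eventually_mono)
        fix \<xi> assume "\<xi> \<in> A"
        have "norm (g \<xi>) powr p \<le> (\<alpha> + \<beta> * norm \<xi>) powr p"
          by (rule powr_mono2) (use p0 bnd[OF \<open>\<xi> \<in> A\<close>] in auto)
        also have "\<dots> \<le> 2 powr p * (\<alpha> powr p + (\<beta> * norm \<xi>) powr p)"
          by (rule powr_add_le) (use a0 b0 p0 in auto)
        also have "\<dots> = 2 powr p * \<alpha> powr p + 2 powr p * \<beta> powr p * norm \<xi> powr p"
          using b0 by (simp add: powr_mult algebra_simps)
        finally show "ennreal (norm (g \<xi>) powr p) \<le> ennreal (2 powr p * \<alpha> powr p) + ennreal (2 powr p * \<beta> powr p) * ennreal (norm \<xi> powr p)"
          by (simp add: ennreal_plus[symmetric] ennreal_mult'[symmetric] ennreal_leI del: ennreal_plus)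
      qed
    qed
    also have "\<dots> = ennreal (2 powr p * \<alpha> powr p) + ennreal (2 powr p * \<beta> powr p) * (\<integral>\<^sup>+ \<xi>. ennreal (norm \<xi> powr p) \<partial>Q)"
    proof -
      have "(\<lambda>\<xi>::real^'n. ennreal (norm \<xi> powr p)) \<in> borel_measurable borel" by measurable
      then have m: "(\<lambda>\<xi>::real^'n. ennreal (norm \<xi> powr p)) \<in> borel_measurable Q"
        using measurable_cong_sets[OF sQ refl] by blast
      show ?thesis
        by (subst nn_integral_add) (use m in \<open>auto simp: nn_integral_cmult prob_space.emeasure_space_1[OF pQ]\<close>)
    qed
    also have "\<dots> < \<infinity>" using mQ by (simp add: ennreal_mult_less_top)
    finally show ?thesis .
  qed
  have WQ': "wasserstein p (\<lambda>s t. \<bar>s - t\<bar>) Q' P' \<le> \<epsilon> * L"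
  proof -
    have "wasserstein p (\<lambda>s t. \<bar>s - t\<bar>) Q' P' \<le> L * wasserstein p (\<lambda>\<xi> \<zeta>. qnorm q (\<xi> - \<zeta>)) Q P"
      unfolding Q'_def P'eq
      by (rule wass_push[OF pQ pP sQ sP mQ mP p q L gb Ab AEA AEP glip])
    also have "\<dots> \<le> L * \<epsilon>" by (rule mult_left_mono[OF WQ L])
    finally show ?thesis by (simp add: mult.commute)
  qed
  have Q'in: "Q' \<in> wball p (\<lambda>s t. \<bar>s - t\<bar>) (f ` \<Xi>) P' (\<epsilon> * L)"
    unfolding wball_def Pp_def using sQ' pQ' AEQ' mQ' WQ' by blast
  have fm: "f \<in> borel_measurable (completion Q)"
  proof (rule measurableI)
    fix B :: "real set" assume B: "B \<in> sets borel"
    have eq: "f -` B \<inter> space (completion Q) = (g -` B \<inter> space Q \<inter> A) \<union> {\<xi> \<in> space (completion Q). \<xi> \<notin> A \<and> f \<xi> \<in> B}"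
      by (auto simp: g_def)
    have "g -` B \<inter> space Q \<inter> A \<in> sets Q" using measurable_sets[OF gQ B] Ab sQ by auto
    then have 1: "g -` B \<inter> space Q \<inter> A \<in> sets (completion Q)" by (rule sets_completionI_sets)
    have "AE \<xi> in Q. \<not> (\<xi> \<notin> A \<and> f \<xi> \<in> B)" using AEA by (rule eventually_mono) auto
    then have "Measurable.pred (completion Q) (\<lambda>\<xi>. \<xi> \<notin> A \<and> f \<xi> \<in> B)" by (rule sets_completion_AE)
    then have 2: "{\<xi> \<in> space (completion Q). \<xi> \<notin> A \<and> f \<xi> \<in> B} \<in> sets (completion Q)"
      by (simp add: pred_def)
    show "f -` B \<inter> space (completion Q) \<in> sets (completion Q)" unfolding eq using 1 2 by auto
  qed simp
  have gcm: "g \<in> borel_measurable (completion Q)" using gQ by (rule measurable_completion)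
  have "(\<integral>\<xi>. f \<xi> \<partial>completion Q) = (\<integral>\<xi>. g \<xi> \<partial>completion Q)"
    by (rule integral_cong_AE[OF fm gcm]) (rule AE_completion, use AEA in \<open>auto simp: g_def elim: eventually_mono\<close>)
  also have "\<dots> = (\<integral>\<xi>. g \<xi> \<partial>Q)" by (rule integral_completion[OF gQ])
  also have "\<dots> = (\<integral>\<zeta>. \<zeta> \<partial>Q')" unfolding Q'_def by (subst integral_distr[OF gQ]) simp_all
  finally show ?thesis using Q'in unfolding P'_def by blast
qed



theorem proposition1:
  fixes p :: real and q :: ereal and \<epsilon> :: real
    and \<Xi> :: "(real ^ 'n) set" and X :: "(real ^ 'm) set"
    and F :: "real ^ 'm \<Rightarrow> real ^ 'n \<Rightarrow> real"
    and N :: nat and \<xi>hat :: "nat \<Rightarrow> real ^ 'n" and x :: "real ^ 'm"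
  assumes "p \<ge> 1" and "q \<ge> 1" and "\<epsilon> \<ge> 0" and "N > 0"
    and "\<forall>i<N. \<xi>hat i \<in> \<Xi>"
    and "\<forall>y\<in>X. lipnorm q \<Xi> (F y) < \<infinity>"
    and "x \<in> X"
  shows "(SUP Q \<in> wball p (\<lambda>\<xi> \<zeta>. qnorm q (\<xi> - \<zeta>)) \<Xi> (empirical N \<xi>hat) \<epsilon>.
            ereal (\<integral>\<xi>. F x \<xi> \<partial>(completion Q)))
         \<le> (SUP Q \<in> wball p (\<lambda>s t. \<bar>s - t\<bar>) (F x ` \<Xi>) (empirical N (\<lambda>i. F x (\<xi>hat i)))
                       (\<epsilon> * real_of_ereal (lipnorm q \<Xi> (F x))).
            ereal (\<integral>\<zeta>. \<zeta> \<partial>Q))"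
proof (rule SUP_least)
  fix Q assume Q: "Q \<in> wball p (\<lambda>\<xi> \<zeta>. qnorm q (\<xi> - \<zeta>)) \<Xi> (empirical N \<xi>hat) \<epsilon>"
  have LB: "0 \<le> real_of_ereal (lipnorm q \<Xi> (F x)) \<and>
    (\<forall>a\<in>\<Xi>. \<forall>b\<in>\<Xi>. \<bar>F x a - F x b\<bar> \<le> real_of_ereal (lipnorm q \<Xi> (F x)) * qnorm q (a - b))"
    using lip_bound[OF assms(2)] assms(6,7) by blast
  obtain Q' where Q': "Q' \<in> wball p (\<lambda>s t. \<bar>s - t\<bar>) (F x ` \<Xi>) (empirical N (\<lambda>i. F x (\<xi>hat i)))
                       (\<epsilon> * real_of_ereal (lipnorm q \<Xi> (F x)))"
    and eq: "(\<integral>\<xi>. F x \<xi> \<partial>completion Q) = (\<integral>\<zeta>. \<zeta> \<partial>Q')"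
    using per_Q[OF assms(1,2,4,5) conjunct1[OF LB] conjunct2[OF LB] Q] by blast
  show "ereal (\<integral>\<xi>. F x \<xi> \<partial>completion Q) \<le> (SUP Q \<in> wball p (\<lambda>s t. \<bar>s - t\<bar>) (F x ` \<Xi>) (empirical N (\<lambda>i. F x (\<xi>hat i)))
                       (\<epsilon> * real_of_ereal (lipnorm q \<Xi> (F x))). ereal (\<integral>\<zeta>. \<zeta> \<partial>Q))"
    unfolding eq by (rule SUP_upper[OF Q'])
qed

end
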